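(* Let $\lambda_1\ge0$ and $\lambda_2=0$, and let $P_n,k_n,c_n,Q_n,\widehat k_n,a_n,b_n$ be as in the context. Then for all $n\ge1$: (1) $\dfrac{c_{n+2}c_{n+1}}{a_{n+2}}+a_n=c_{n+1}+c_n$; (2) $a_{n+1}b_n=c_{n+1}c_n$; (3) $\displaystyle\lim_{n\to\infty}\frac{a_n}{\sqrt n}=\lim_{n\to\infty}\frac{b_n}{\sqrt n}=\frac{1}{2\sqrt3}$.
   Context: $P_n$ are the monic polynomials orthogonal with respect to $\langle f,g\rangle_F=\int_{\mathbb R}fg\,e^{-x^4}dx$, $k_n=\langle P_n,P_n\rangle_F$, and $c_n$ are defined by the three-term recurrence $xP_n(x)=P_{n+1}(x)+c_nP_{n-1}(x)$ ($n\ge1$), so $c_n=k_n/k_{n-1}$ and $c_0=0$. $Q_n$ are the monic polynomials orthogonal with respect to $\langle f,g\rangle_S=\int_{\mathbb R}fg\,e^{-x^4}dx+\lambda_1f(0)g(0)$, $\widehat k_n=\langle Q_n,Q_n\rangle_S$, and $a_n=k_n/\widehat k_{n-1}$, $b_n=\widehat k_n/k_{n-1}$ for $n\ge1$ (these are the coefficients in $xP_n=Q_{n+1}+a_nQ_{n-1}$ and $xQ_n=P_{n+1}+b_nP_{n-1}$). *)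

theory Defs
  imports "HOL-Analysis.Analysis" "HOL-Computational_Algebra.Polynomial"
begin

definition ipF :: "real poly \<Rightarrow> real poly \<Rightarrow> real" where
  "ipF f g = (\<integral>x. poly f x * poly g x * exp (- (x ^ 4)) \<partial>lborel)"

text \<open>Sobolev-type (here: discrete) inner product with a mass lambda1 at 0 (lambda2 = 0).\<close>
definition ipS :: "real \<Rightarrow> real poly \<Rightarrow> real poly \<Rightarrow> real" where
  "ipS l1 f g = ipF f g + l1 * poly f 0 * poly g 0"

definition monic_OP :: "(real poly \<Rightarrow> real poly \<Rightarrow> real) \<Rightarrow> nat \<Rightarrow> real poly" where
  "monic_OP ip n = (THE p. degree p = n \<and> lead_coeff p = 1 \<and>
                       (\<forall>q. degree q < n \<longrightarrow> ip p q = 0))"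

definition P :: "nat \<Rightarrow> real poly" where "P n = monic_OP ipF n"
definition kF :: "nat \<Rightarrow> real" where "kF n = ipF (P n) (P n)"
definition c :: "nat \<Rightarrow> real" where "c n = (if n = 0 then 0 else kF n / kF (n - 1))"

definition Q :: "real \<Rightarrow> nat \<Rightarrow> real poly" where "Q l1 n = monic_OP (ipS l1) n"
definition kS :: "real \<Rightarrow> nat \<Rightarrow> real" where "kS l1 n = ipS l1 (Q l1 n) (Q l1 n)"

definition a :: "real \<Rightarrow> nat \<Rightarrow> real" where "a l1 n = kF n / kS l1 (n - 1)"
definition b :: "real \<Rightarrow> nat \<Rightarrow> real" where "b l1 n = kS l1 n / kF (n - 1)"

end

theory Submission
  imports Defs "HOL-Probability.Distributions" "HOL-Library.Liminf_Limsup" "HOL-Library.Extended_Real"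
begin


lemma mono_bound: "\<bar>(x::real) ^ k * exp (- (x ^ 4))\<bar> \<le> exp (1/16) * sqrt (2*pi) * (normal_density 0 1 x * \<bar>x - 0\<bar> ^ k)"
proof -
  have e: "exp (- (x ^ 4)) \<le> exp (1/16) * exp (-(x - 0)\<^sup>2 / (2 * 1\<^sup>2))"
  proof -
    have "- (x ^ 4) \<le> 1/16 + (-(x - 0)\<^sup>2 / (2 * 1\<^sup>2))"
    proof -
      have "(x^2 - 1/4)^2 = x^4 - x^2/2 + 1/16" by (simp add: power2_eq_square algebra_simps power4_eq_xxxx)
      moreover have "0 \<le> (x^2 - 1/4)^2" by simp
      ultimately show ?thesis by simp
    qed
    hence "exp (- (x ^ 4)) \<le> exp (1/16 + (-(x - 0)\<^sup>2 / (2 * 1\<^sup>2)))" by (simp only: exp_le_cancel_iff)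
    thus ?thesis by (simp only: exp_add)
  qed
  have "\<bar>x ^ k * exp (- (x ^ 4))\<bar> = \<bar>x\<bar>^k * exp (- (x ^ 4))" by (simp add: abs_mult power_abs)
  also have "\<dots> \<le> \<bar>x\<bar>^k * (exp (1/16) * exp (-(x - 0)\<^sup>2 / (2 * 1\<^sup>2)))"
    by (rule mult_left_mono[OF e]) simp
  also have "\<dots> = exp (1/16) * sqrt (2*pi) * (normal_density 0 1 x * \<bar>x - 0\<bar> ^ k)"
    by (simp add: normal_density_def)
  finally show ?thesis .
qed

lemma integrable_mono: "integrable lborel (\<lambda>x::real. x ^ k * exp (- (x ^ 4)))"
proof -
  have "integrable lborel (\<lambda>x. normal_density 0 1 x * \<bar>x - 0\<bar> ^ k)"
    using integrable_normal_moment_abs[of 1 0 k] by simp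
  hence i: "integrable lborel (\<lambda>x. exp (1/16) * sqrt (2*pi) * (normal_density 0 1 x * \<bar>x - 0\<bar> ^ k))"
    by (rule integrable_mult_right)
  show ?thesis
    by (rule Bochner_Integration.integrable_bound[OF i]) (auto intro!: AE_I2 order_trans[OF mono_bound])
qed

lemma integrable_poly: "integrable lborel (\<lambda>x. poly (p::real poly) x * exp (- (x ^ 4)))"
proof -
  have "integrable lborel (\<lambda>x. \<Sum>i\<le>degree p. coeff p i * (x ^ i * exp (- (x ^ 4))))"
    by (intro Bochner_Integration.integrable_sum integrable_mult_right integrable_mono)
  moreover have "(\<lambda>x. \<Sum>i\<le>degree p. coeff p i * (x ^ i * exp (- (x ^ 4)))) = (\<lambda>x. poly p x * exp (- (x ^ 4)))"
    by (auto simp: poly_altdef sum_distrib_right mult.assoc)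
  ultimately show ?thesis by simp
qed

lemma integrable_poly2[intro]: "integrable lborel (\<lambda>x. poly (f::real poly) x * poly g x * exp (- (x ^ 4)))"
  using integrable_poly[of "f*g"] by simp

lemma measurable_poly2[measurable]: "(\<lambda>x. poly (f::real poly) x * poly g x * exp (- (x ^ 4))) \<in> borel_measurable borel"
  by (intro borel_measurable_continuous_onI continuous_intros)

lemma ipF_alt: "ipF f g = (\<integral>x. poly (f * g) x * exp (- (x ^ 4)) \<partial>lborel)"
  unfolding ipF_def by simp




definition refl :: "real poly \<Rightarrow> real poly" where "refl p = pcompose p [:0, -1:]"

lemma poly_refl[simp]: "poly (refl p) x = poly p (- x)"
  by (simp add: refl_def poly_pcompose)

lemma ipF_sym: "ipF f g = ipF g f"
  unfolding ipF_def by (simp add: mult.commute mult.left_commute)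

lemma ipF_add: "ipF (f + g) h = ipF f h + ipF g h"
proof -
  have "ipF (f + g) h = (\<integral>x. poly (f*h) x * exp (- (x ^ 4)) + poly (g*h) x * exp (- (x ^ 4)) \<partial>lborel)"
    unfolding ipF_def by (rule Bochner_Integration.integral_cong) (auto simp: algebra_simps)
  also have "\<dots> = ipF f h + ipF g h"
    by (subst Bochner_Integration.integral_add) (auto intro: integrable_poly simp: ipF_alt)
  finally show ?thesis .
qed

lemma ipF_smult: "ipF (smult r f) h = r * ipF f h"
  unfolding ipF_def by (simp add: mult.assoc)

lemma ipF_x: "ipF ([:0,1:] * f) g = ipF f ([:0,1:] * g)"
  unfolding ipF_def by (rule Bochner_Integration.integral_cong) (auto simp: algebra_simps)

lemma ipF_refl: "ipF (refl f) (refl g) = ipF f g"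
proof -
  let ?h = "\<lambda>x::real. poly f x * poly g x * exp (- (x ^ 4))"
  have "ipF (refl f) (refl g) = (\<integral>x. ?h (uminus x) \<partial>lborel)"
    unfolding ipF_def by simp
  also have "\<dots> = (\<integral>x. ?h x \<partial>(distr lborel borel uminus))"
    by (subst integral_distr) (auto simp: comp_def)
  also have "\<dots> = ipF f g" unfolding lborel_distr_uminus ipF_def ..
  finally show ?thesis .
qed

lemma ipF_pos:
  assumes "p \<noteq> 0" shows "ipF p p > 0"
proof -
  have int: "integrable lborel (\<lambda>x. poly p x * poly p x * exp (- (x ^ 4)))"
    using integrable_poly[of "p*p"] by simp
  have nn: "AE x in lborel. 0 \<le> poly p x * poly p x * exp (- (x ^ 4))" by simp
  have ge: "ipF p p \<ge> 0" unfolding ipF_def by (rule integral_nonneg_AE[OF nn])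
  have "ipF p p \<noteq> 0"
  proof
    assume "ipF p p = 0"
    hence "AE x in lborel. poly p x * poly p x * exp (- (x ^ 4)) = 0"
      using integral_nonneg_eq_0_iff_AE[OF int nn] unfolding ipF_def by simp
    hence a1: "AE x in lborel. x \<in> {x. poly p x = 0}" by simp
    have fin: "finite {x. poly p x = 0}" using poly_roots_finite[OF assms] .
    have a2: "AE x in lborel. x \<notin> {x. poly p x = 0}"
      by (rule AE_not_in, rule finite_imp_null_set_lborel[OF fin])
    have "AE x::real in lborel. False" using eventually_conj[OF a1 a2] by (rule eventually_mono) auto
    hence "ae_filter (lborel :: real measure) = bot" using trivial_limit_def by blast
    thus False unfolding ae_filter_eq_bot_iff by simp
  qed
  with ge show ?thesis by simp
qed

lemma lim_mono_top: "((\<lambda>x::real. x ^ i * exp (- (x ^ 4))) \<longlongrightarrow> 0) at_top"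
proof (rule tendsto_0_le[OF tendsto_power_div_exp_0[of i], where K=1])
  show "\<forall>\<^sub>F x::real in at_top. norm (x ^ i * exp (- (x ^ 4))) \<le> norm (x ^ i / exp x) * 1"
  proof -
    have ev: "eventually (\<lambda>x::real. 1 \<le> x) at_top" by (rule eventually_ge_at_top)
    show ?thesis
  proof (rule eventually_mono[OF ev])
    fix x :: real assume elim: "1 \<le> x"
    have "x \<le> x ^ 4"
    proof -
      have "x * 1 \<le> x * x^3" using elim by (intro mult_left_mono) (auto simp: one_le_power)
      thus ?thesis by (simp add: power_numeral_reduce)
    qed
    hence "exp (- (x ^ 4)) \<le> exp (- x)" by simp
    hence "x ^ i * exp (- (x ^ 4)) \<le> x ^ i * exp (- x)" using elim by (intro mult_left_mono) auto
    thus "norm (x ^ i * exp (- (x ^ 4))) \<le> norm (x ^ i / exp x) * 1" using elim by (simp add: exp_minus divide_inverse)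
  qed
  qed
qed

lemma lim_poly_top: "((\<lambda>x::real. poly h x * exp (- (x ^ 4))) \<longlongrightarrow> 0) at_top"
proof -
  have "((\<lambda>x::real. \<Sum>i\<le>degree h. coeff h i * (x ^ i * exp (- (x ^ 4)))) \<longlongrightarrow> (\<Sum>i\<le>degree h. coeff h i * 0)) at_top"
    by (intro tendsto_sum tendsto_mult tendsto_const lim_mono_top)
  moreover have "(\<lambda>x. \<Sum>i\<le>degree h. coeff h i * (x ^ i * exp (- (x ^ 4)))) = (\<lambda>x. poly h x * exp (- (x ^ 4)))"
    by (auto simp: poly_altdef sum_distrib_right mult.assoc)
  ultimately show ?thesis by simp
qed

lemma lim_poly_bot: "((\<lambda>x::real. poly h x * exp (- (x ^ 4))) \<longlongrightarrow> 0) at_bot"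
  unfolding filterlim_at_bot_mirror using lim_poly_top[of "refl h"] by simp

lemma ibp0: "(\<integral>x. poly (pderiv (h::real poly) - [:0,0,0,4:] * h) x * exp (- (x ^ 4)) \<partial>lborel) = 0"
proof -
  let ?F = "\<lambda>x::real. poly h x * exp (- (x ^ 4))"
  let ?f = "\<lambda>x::real. poly (pderiv h - [:0,0,0,4:] * h) x * exp (- (x ^ 4))"
  have "(LBINT x=-\<infinity>..\<infinity>. ?f x) = 0 - 0"
  proof (rule interval_integral_FTC_integrable)
    fix x :: real
    have "(?F has_real_derivative (poly (pderiv h) x * exp (- (x ^ 4)) + poly h x * (exp (- (x ^ 4)) * (- (4 * x ^ 3))))) (at x)"
      by (auto intro!: derivative_eq_intros simp: algebra_simps)
    moreover have "poly (pderiv h) x * exp (- (x ^ 4)) + poly h x * (exp (- (x ^ 4)) * (- (4 * x ^ 3))) = ?f x"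
      by (simp add: algebra_simps power_numeral_reduce)
    ultimately show "(?F has_vector_derivative ?f x) (at x)"
      by (simp add: has_real_derivative_iff_has_vector_derivative)
    show "isCont ?f x" by (auto intro!: continuous_intros)
  next
    show "set_integrable lborel (einterval (- \<infinity>) \<infinity>) ?f"
      unfolding set_integrable_def using integrable_poly[of "pderiv h - [:0,0,0,4:] * h"] by simp
    show "((?F \<circ> real_of_ereal) \<longlongrightarrow> 0) (at_right (- \<infinity>))"
      unfolding ereal_tendsto_simps1 by (rule lim_poly_bot)
    show "((?F \<circ> real_of_ereal) \<longlongrightarrow> 0) (at_left \<infinity>)"
      unfolding ereal_tendsto_simps1 by (rule lim_poly_top)
  qed simp
  thus ?thesis
    by (simp add: interval_lebesgue_integral_def set_lebesgue_integral_def)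
qed

lemma ipF_ibp: "ipF (pderiv f) g + ipF f (pderiv g) = 4 * ipF f ([:0,0,0,1:] * g)"
proof -
  let ?A = "\<lambda>x. poly (pderiv f) x * poly g x * exp (- (x ^ 4))"
  let ?B = "\<lambda>x. poly f x * poly (pderiv g) x * exp (- (x ^ 4))"
  let ?C = "\<lambda>x. poly f x * poly ([:0,0,0,1:] * g) x * exp (- (x ^ 4))"
  have "(\<integral>x. poly (pderiv (f*g) - [:0,0,0,4:] * (f*g)) x * exp (- (x ^ 4)) \<partial>lborel)
       = (\<integral>x. ?A x + ?B x - 4 * ?C x \<partial>lborel)"
      by (rule Bochner_Integration.integral_cong) (auto simp: pderiv_mult algebra_simps)
  also have "\<dots> = (\<integral>x. ?A x + ?B x \<partial>lborel) - (\<integral>x. 4 * ?C x \<partial>lborel)"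
    by (rule Bochner_Integration.integral_diff) (intro Bochner_Integration.integrable_add integrable_mult_right integrable_poly2)+
  also have "\<dots> = ipF (pderiv f) g + ipF f (pderiv g) - 4 * ipF f ([:0,0,0,1:] * g)"
    unfolding ipF_def
    by (simp only: Bochner_Integration.integral_add[OF integrable_poly2 integrable_poly2] integral_mult_right_zero)
  finally show ?thesis using ibp0[of "f*g"] by simp
qed




lemma poly_refl_refl[simp]: "refl (refl p) = p"
  by (rule poly_ext) simp

lemma degree_refl[simp]: "degree (refl p) = degree p"
  by (simp add: refl_def degree_pcompose)

lemma lead_refl: "lead_coeff (refl p) = lead_coeff p * (-1) ^ degree p"
  unfolding refl_def by (subst lead_coeff_comp) auto

lemma refl_xmult: "refl ([:0,1:] * f) = smult (-1) ([:0,1:] * refl f)"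
  by (rule poly_ext) simp

lemma refl_smult: "refl (smult r f) = smult r (refl f)"
  by (rule poly_ext) simp

lemma refl_x_par: "refl g = smult s g \<Longrightarrow> refl ([:0,1:] * g) = smult (- s) ([:0,1:] * g)"
proof (rule poly_ext)
  fix x assume "refl g = smult s g"
  hence "poly (refl g) x = poly (smult s g) x" by simp
  hence "poly g (-x) = s * poly g x" by simp
  thus "poly (refl ([:0,1:] * g)) x = poly (smult (- s) ([:0,1:] * g)) x" by simp
qed

lemma deg_drop: "degree r \<le> m \<Longrightarrow> coeff r m = 0 \<Longrightarrow> r \<noteq> 0 \<Longrightarrow> degree r < m"
  by (metis le_neq_implies_less leading_coeff_0_iff)

function gs :: "(real poly \<Rightarrow> real poly \<Rightarrow> real) \<Rightarrow> nat \<Rightarrow> real poly" where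
  "gs ip n = monom 1 n - (\<Sum>j<n. smult (ip (monom 1 n) (gs ip j) / ip (gs ip j) (gs ip j)) (gs ip j))"
  by auto
termination by (relation "Wellfounded.measure (\<lambda>(ip,n). n)") auto

declare gs.simps[simp del]

locale ortho =
  fixes ip :: "real poly \<Rightarrow> real poly \<Rightarrow> real"
  assumes sym: "ip f g = ip g f"
    and add: "ip (f + g) h = ip f h + ip g h"
    and smult: "ip (smult r f) h = r * ip f h"
    and pos: "f \<noteq> 0 \<Longrightarrow> 0 < ip f f"
    and reflip: "ip (refl f) (refl g) = ip f g"
begin

lemma smult_r: "ip h (smult r f) = r * ip h f"
  by (subst sym, subst smult, subst sym, rule refl)

lemma add_r: "ip h (f + g) = ip h f + ip h g"
  by (subst sym, subst add, subst (1 2) sym, rule refl)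

lemma zero_l[simp]: "ip 0 h = 0"
  using smult[of 0 h h] by simp

lemma zero_r[simp]: "ip h 0 = 0"
  by (subst sym, rule zero_l)

lemma minus_l: "ip (- f) h = - ip f h"
  using smult[of "-1" f h] by simp

lemma diff_l: "ip (f - g) h = ip f h - ip g h"
  using add[of f "-g" h] minus_l[of g h] by simp

lemma diff_r: "ip h (f - g) = ip h f - ip h g"
  by (subst sym, subst diff_l, subst (1 2) sym, rule refl)

lemma sum_l: "ip (\<Sum>j\<in>A. F j) h = (\<Sum>j\<in>A. ip (F j) h)"
  by (induction A rule: infinite_finite_induct) (auto simp: add)

lemma sum_r: "ip h (\<Sum>j\<in>A. F j) = (\<Sum>j\<in>A. ip h (F j))"
  by (subst sym, subst sum_l, subst sym, rule refl)

lemma expand2: "ip (f + smult r g) (f + smult r g) = ip f f + r * ip f g + r * ip g f + r * r * ip g g"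
  by (simp add: add add_r smult smult_r algebra_simps)

lemma nonneg: "0 \<le> ip f f"
  using pos[of f] by (cases "f = 0") auto

lemma refl_move: "ip (refl f) g = ip f (refl g)"
  using reflip[of f "refl g"] by simp

lemma gs_props: "degree (gs ip n) = n \<and> lead_coeff (gs ip n) = 1 \<and> (\<forall>j<n. ip (gs ip n) (gs ip j) = 0)"
proof (induction n rule: less_induct)
  case (less n)
  define S where "S = (\<Sum>j<n. smult (ip (monom 1 n) (gs ip j) / ip (gs ip j) (gs ip j)) (gs ip j))"
  have g: "gs ip n = monom 1 n - S" unfolding S_def by (subst gs.simps) simp
  have cS: "coeff S k = 0" if "k \<ge> n" for k
  proof -
    have "coeff S k = (\<Sum>j<n. (ip (monom 1 n) (gs ip j) / ip (gs ip j) (gs ip j)) * coeff (gs ip j) k)"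
      unfolding S_def by (simp add: coeff_sum)
    also have "\<dots> = 0"
    proof (rule sum.neutral, rule ballI)
      fix j assume "j \<in> {..<n}"
      hence "degree (gs ip j) < k" using less.IH[of j] that by auto
      thus "(ip (monom 1 n) (gs ip j) / ip (gs ip j) (gs ip j)) * coeff (gs ip j) k = 0"
        by (simp add: coeff_eq_0)
    qed
    finally show ?thesis .
  qed
  have cn: "coeff (gs ip n) n = 1" using cS[of n] by (simp add: g)
  have ck: "coeff (gs ip n) k = 0" if "k > n" for k using cS[of k] that by (simp add: g coeff_monom)
  have deg: "degree (gs ip n) = n"
  proof (rule antisym)
    show "degree (gs ip n) \<le> n" using ck by (meson degree_le leI)
    show "n \<le> degree (gs ip n)" using cn by (intro le_degree) simp
  qed
  have nz: "gs ip j \<noteq> 0" "ip (gs ip j) (gs ip j) \<noteq> 0" if "j < n" for j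
  proof -
    have "lead_coeff (gs ip j) = 1" using less.IH[OF that] by blast
    thus "gs ip j \<noteq> 0" by auto
    thus "ip (gs ip j) (gs ip j) \<noteq> 0" using pos by (metis less_irrefl)
  qed
  have orth: "ip (gs ip j) (gs ip i) = 0" if "j < n" "i < n" "j \<noteq> i" for i j
  proof (cases "i < j")
    case True thus ?thesis using less.IH[of j] that by auto
  next
    case False
    hence "j < i" using that by auto
    thus ?thesis using less.IH[of i] that sym by metis
  qed
  have "ip (gs ip n) (gs ip i) = 0" if "i < n" for i
  proof -
    have "ip S (gs ip i) = (\<Sum>j<n. (ip (monom 1 n) (gs ip j) / ip (gs ip j) (gs ip j)) * ip (gs ip j) (gs ip i))"
      unfolding S_def by (simp add: sum_l smult)
    also have "\<dots> = (ip (monom 1 n) (gs ip i) / ip (gs ip i) (gs ip i)) * ip (gs ip i) (gs ip i)"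
      using that orth by (subst sum.remove[of _ i]) (auto intro!: sum.neutral)
    also have "\<dots> = ip (monom 1 n) (gs ip i)" using nz(2)[OF that] by simp
    finally show ?thesis by (simp add: g diff_l)
  qed
  thus ?case using deg cn by simp
qed

lemma gs_deg[simp]: "degree (gs ip n) = n" using gs_props by blast
lemma gs_coeff[simp]: "coeff (gs ip n) n = 1" using gs_props[of n] by (metis gs_deg)

lemma gs_orth_low: "degree q < n \<Longrightarrow> ip (gs ip n) q = 0"
proof (induction "degree q" arbitrary: q rule: less_induct)
  case less
  show ?case
  proof (cases "q = 0")
    case True thus ?thesis by simp
  next
    case False
    define d where "d = degree q"
    define r where "r = q - smult (coeff q d) (gs ip d)"
    have gd: "degree (gs ip d) = d" "lead_coeff (gs ip d) = 1" using gs_props[of d] by auto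
    have q: "q = smult (coeff q d) (gs ip d) + r" unfolding r_def by simp
    have dr: "degree r \<le> d" unfolding r_def d_def
      by (rule degree_diff_le) (auto simp: gd[unfolded d_def] intro: order.trans[OF degree_smult_le])
    have cr: "coeff r d = 0" unfolding r_def using gd by (simp add: d_def)
    have "ip (gs ip n) r = 0"
    proof (cases "r = 0")
      case False
      hence "degree r < d" using deg_drop dr cr by blast
      thus ?thesis using less d_def by auto
    qed simp
    moreover have "ip (gs ip n) (gs ip d) = 0" using gs_props[of n] less d_def by auto
    ultimately show ?thesis by (subst q) (simp add: add_r smult_r)
  qed
qed

lemma gs_unique:
  assumes p: "degree p = n" "lead_coeff p = 1" "\<forall>q. degree q < n \<longrightarrow> ip p q = 0"
  shows "p = gs ip n"
proof -
  define r where "r = p - gs ip n"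
  have "r = 0"
  proof (rule ccontr)
    assume "r \<noteq> 0"
    moreover have "degree r \<le> n" unfolding r_def using p by (intro degree_diff_le) auto
    moreover have "coeff r n = 0" unfolding r_def using p by auto
    ultimately have "degree r < n" using deg_drop by blast
    hence "ip p r = 0" "ip (gs ip n) r = 0" using p gs_orth_low by auto
    hence "ip r r = 0" unfolding r_def by (simp add: diff_l)
    with \<open>r \<noteq> 0\<close> pos show False by (metis less_irrefl)
  qed
  thus "p = gs ip n" unfolding r_def by simp
qed

lemma monic_OP_eq: "monic_OP ip n = gs ip n"
  unfolding monic_OP_def
proof (rule the_equality)
  show "degree (gs ip n) = n \<and> lead_coeff (gs ip n) = 1 \<and> (\<forall>q. degree q < n \<longrightarrow> ip (gs ip n) q = 0)"
    using gs_props gs_orth_low by blast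
qed (use gs_unique in blast)

abbreviation "Pn n \<equiv> monic_OP ip n"
abbreviation "kn n \<equiv> ip (Pn n) (Pn n)"

lemma Pn_deg[simp]: "degree (Pn n) = n" and Pn_lead[simp]: "lead_coeff (Pn n) = 1"
  using gs_props[of n] by (auto simp: monic_OP_eq)

lemma Pn_coeff[simp]: "coeff (Pn n) n = 1" by (simp add: monic_OP_eq)

lemma Pn_nz[simp]: "Pn n \<noteq> 0"
  using Pn_lead[of n] by (metis leading_coeff_0_iff zero_neq_one)

lemma kn_pos: "0 < kn n" using pos Pn_nz by blast

lemma orth_l: "degree q < n \<Longrightarrow> ip (Pn n) q = 0"
  using gs_orth_low by (simp add: monic_OP_eq)

lemma orth_r: "degree q < n \<Longrightarrow> ip q (Pn n) = 0"
  using orth_l sym by metis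

lemma Pn_orth: "i \<noteq> j \<Longrightarrow> ip (Pn i) (Pn j) = 0"
  by (cases "i < j") (auto simp: orth_l orth_r)

lemma Pn_unique: "degree p = n \<Longrightarrow> lead_coeff p = 1 \<Longrightarrow> (\<And>q. degree q < n \<Longrightarrow> ip p q = 0) \<Longrightarrow> p = Pn n"
  unfolding monic_OP_eq by (rule gs_unique) auto

lemma orth_drop: "degree q \<le> m \<Longrightarrow> coeff q m = 0 \<Longrightarrow> ip q (Pn m) = 0"
  by (cases "q = 0") (auto dest: deg_drop intro: orth_r)

lemma coeffP: "degree f \<le> m \<Longrightarrow> ip f (Pn m) = coeff f m * kn m"
proof -
  assume d: "degree f \<le> m"
  define r where "r = f - smult (coeff f m) (Pn m)"
  have "ip r (Pn m) = 0" unfolding r_def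
    by (rule orth_drop) (auto intro!: degree_diff_le d intro: order.trans[OF degree_smult_le])
  moreover have "f = smult (coeff f m) (Pn m) + r" unfolding r_def by simp
  ultimately show ?thesis by (metis add smult add_0_right)
qed

lemma min_norm:
  assumes "degree p = n" "lead_coeff p = 1"
  shows "kn n \<le> ip p p"
proof -
  define r where "r = p - Pn n"
  have o: "ip (Pn n) r = 0"
  proof (cases "r = 0")
    case False
    have "degree r \<le> n" unfolding r_def using assms by (intro degree_diff_le) auto
    moreover have "coeff r n = 0" unfolding r_def using assms by auto
    ultimately have "degree r < n" using deg_drop False by blast
    thus ?thesis by (rule orth_l)
  qed simp
  have p: "p = Pn n + r" unfolding r_def by simp
  have "ip p p = kn n + ip (Pn n) r + ip r (Pn n) + ip r r"
    by (subst (1 2) p) (simp add: add add_r)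
  also have "ip r (Pn n) = 0" using o sym by metis
  finally show ?thesis using o nonneg[of r] by simp
qed

lemma expansion: "degree f \<le> m \<Longrightarrow> f = (\<Sum>j\<le>m. smult (ip f (Pn j) / kn j) (Pn j))"
proof (induction m arbitrary: f)
  case 0
  have P0: "Pn 0 = 1" by (metis Pn_coeff Pn_deg degree_0_id one_pCons)
  have f: "[:coeff f 0:] = f" using 0 degree_0_id by (metis le_0_eq)
  have cf: "ip f (Pn 0) / kn 0 = coeff f 0" using coeffP[of f 0] 0 kn_pos[of 0] by simp
  have "(\<Sum>j\<le>0. smult (ip f (Pn j) / kn j) (Pn j)) = smult (coeff f 0) (Pn 0)" using cf by simp
  also have "\<dots> = f" using f by (simp add: P0)
  finally show ?case ..
next
  case (Suc m)
  define r where "r = f - smult (coeff f (Suc m)) (Pn (Suc m))"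
  have dr: "degree r \<le> m"
  proof -
    have "degree r \<le> Suc m" unfolding r_def
      by (auto intro!: degree_diff_le Suc.prems intro: order.trans[OF degree_smult_le])
    moreover have "coeff r (Suc m) = 0" unfolding r_def by simp
    ultimately show ?thesis by (cases "r = 0") (auto dest: deg_drop)
  qed
  have f: "f = r + smult (coeff f (Suc m)) (Pn (Suc m))" unfolding r_def by simp
  have ipf: "ip f (Pn j) = ip r (Pn j)" if "j \<le> m" for j
    using that by (subst f) (simp add: add smult Pn_orth)
  have top: "ip f (Pn (Suc m)) / kn (Suc m) = coeff f (Suc m)"
    using coeffP[OF Suc.prems] kn_pos[of "Suc m"] by simp
  have "(\<Sum>j\<le>Suc m. smult (ip f (Pn j) / kn j) (Pn j))
      = (\<Sum>j\<le>m. smult (ip r (Pn j) / kn j) (Pn j)) + smult (coeff f (Suc m)) (Pn (Suc m))"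
    by (simp add: ipf top)
  also have "\<dots> = f" using Suc.IH[OF dr] f by simp
  finally show ?case ..
qed

lemma two_term:
  assumes "degree f \<le> m" "i1 \<le> m" "i2 \<le> m" "i1 \<noteq> i2"
    and z: "\<And>j. j \<le> m \<Longrightarrow> j \<noteq> i1 \<Longrightarrow> j \<noteq> i2 \<Longrightarrow> ip f (Pn j) = 0"
  shows "f = smult (ip f (Pn i1) / kn i1) (Pn i1) + smult (ip f (Pn i2) / kn i2) (Pn i2)"
proof -
  have "f = (\<Sum>j\<le>m. smult (ip f (Pn j) / kn j) (Pn j))" by (rule expansion[OF assms(1)])
  also have "\<dots> = (\<Sum>j\<in>{i1,i2}. smult (ip f (Pn j) / kn j) (Pn j))"
    by (rule sum.mono_neutral_right) (use assms in auto)
  also have "\<dots> = smult (ip f (Pn i1) / kn i1) (Pn i1) + smult (ip f (Pn i2) / kn i2) (Pn i2)"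
    using assms(4) by simp
  finally show ?thesis .
qed

lemma sgn_sq: "((-1::real)^n) * ((-1)^n) = 1"
  by (simp flip: power_mult_distrib)

lemma parity_Pn: "refl (Pn n) = smult ((-1)^n) (Pn n)"
proof -
  have "smult ((-1)^n) (refl (Pn n)) = Pn n"
  proof (rule Pn_unique)
    show "degree (smult ((-1)^n) (refl (Pn n))) = n" by simp
    have "lead_coeff (smult ((- 1) ^ n) (refl (Pn n))) = (-1)^n * (1 * (-1)^n)"
      by (simp only: lead_coeff_smult lead_refl Pn_coeff Pn_deg)
    thus "lead_coeff (smult ((- 1) ^ n) (refl (Pn n))) = 1" using sgn_sq[of n] by simp
    fix q :: "real poly" assume "degree q < n"
    thus "ip (smult ((- 1) ^ n) (refl (Pn n))) q = 0"
      by (simp add: smult refl_move orth_l)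
  qed
  hence "smult ((-1)^n) (smult ((-1)^n) (refl (Pn n))) = smult ((-1)^n) (Pn n)" by simp
  thus ?thesis by (simp only: smult_smult sgn_sq smult_1_left)
qed

lemma parity_zero:
  assumes "refl f = smult s f" "refl g = smult t g" "s * t = -1"
  shows "ip f g = 0"
proof -
  have "ip f g = ip (refl f) (refl g)" by (simp add: reflip)
  also have "\<dots> = s * (t * ip f g)" using assms by (simp add: smult smult_r)
  also have "\<dots> = (s * t) * ip f g" by simp
  finally show ?thesis using assms(3) by simp
qed

lemma parity_xPn: "refl ([:0,1:] * Pn n) = smult (- ((-1)^n)) ([:0,1:] * Pn n)"
  by (rule refl_x_par[OF parity_Pn])

lemma xPn_Pn: "ip ([:0,1:] * g) (Pn n) = 0" if "refl g = smult ((-1)^n) g"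
  by (rule parity_zero[OF refl_x_par[OF that] parity_Pn]) (simp add: sgn_sq)

end




lemma ipF_ortho: "ortho ipF"
  by unfold_locales (rule ipF_sym, rule ipF_add, rule ipF_smult, erule ipF_pos, rule ipF_refl)

lemma ipS_ortho: assumes "l \<ge> 0" shows "ortho (ipS l)"
proof unfold_locales
  fix f g h :: "real poly" and r :: real
  show "ipS l f g = ipS l g f" by (simp add: ipS_def ipF_sym)
  show "ipS l (f + g) h = ipS l f h + ipS l g h" by (simp add: ipS_def ipF_add algebra_simps)
  show "ipS l (smult r f) h = r * ipS l f h" by (simp add: ipS_def ipF_smult algebra_simps)
  show "ipS l (refl f) (refl g) = ipS l f g" by (simp add: ipS_def ipF_refl)
  assume "f \<noteq> 0"
  hence "0 < ipF f f" by (rule ipF_pos)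
  moreover have "0 \<le> l * poly f 0 * poly f 0" using assms by (simp add: mult.assoc)
  ultimately show "0 < ipS l f f" by (simp add: ipS_def)
qed

lemma ipS0: "ipS 0 = ipF" by (intro ext) (simp add: ipS_def)
lemma Q0: "Q 0 n = P n" by (simp add: Q_def P_def ipS0)
lemma kS0: "kS 0 n = kF n" by (simp add: kS_def kF_def Q0 ipS0)

lemma ipS_X: "ipS l ([:0,1:] * f) g = ipF ([:0,1:] * f) g"
  by (simp add: ipS_def)

lemma kF_pos: "0 < kF n"
  using ortho.kn_pos[OF ipF_ortho] by (simp add: kF_def P_def)

lemma kS_pos: "l \<ge> 0 \<Longrightarrow> 0 < kS l n"
  using ortho.kn_pos[OF ipS_ortho] by (simp add: kS_def Q_def)

lemma ipF_pc: "ipF (pCons 0 f) g = ipF f (pCons 0 g)"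
  using ipF_x[of f g] by simp

lemma ipS_pc: "ipS l (pCons 0 f) g = ipF (pCons 0 f) g"
  by (simp add: ipS_def)

lemma P_deg[simp]: "degree (P n) = n" using ortho.Pn_deg[OF ipF_ortho] by (simp add: P_def)
lemma P_nz[simp]: "P n \<noteq> 0" using ortho.Pn_nz[OF ipF_ortho] by (simp add: P_def)
lemma P_coeff[simp]: "coeff (P n) n = 1" using ortho.Pn_coeff[OF ipF_ortho] by (simp add: P_def)

lemma rec_S:
  assumes l: "l \<ge> 0" and n: "n \<ge> 1"
  shows "[:0,1:] * P n = Q l (n+1) + smult (kF n / kS l (n-1)) (Q l (n-1))"
proof -
  interpret S: ortho "ipS l" by (rule ipS_ortho[OF l])
  interpret F: ortho ipF by (rule ipF_ortho)
  have QS: "S.Pn m = Q l m" for m by (simp add: Q_def)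
  have PF: "F.Pn m = P m" for m by (simp add: P_def)
  let ?f = "[:0,1:] * P n"
  have df: "degree ?f = n + 1" by (simp)
  have "?f = smult (ipS l ?f (S.Pn (n+1)) / S.kn (n+1)) (S.Pn (n+1)) + smult (ipS l ?f (S.Pn (n-1)) / S.kn (n-1)) (S.Pn (n-1))"
  proof (rule S.two_term)
    fix j assume j: "j \<le> n + 1" "j \<noteq> n + 1" "j \<noteq> n - 1"
    show "ipS l ?f (S.Pn j) = 0"
    proof (cases "j = n")
      case True
      thus ?thesis using S.xPn_Pn[of "P n" n] F.parity_Pn[of n] by (simp add: PF)
    next
      case False
      hence "j + 1 < n" using j by auto
      hence "degree ([:0,1:] * S.Pn j) < n" by (simp)
      hence "ipF (P n) ([:0,1:] * S.Pn j) = 0" using F.orth_l[of "[:0,1:] * S.Pn j" n] by (simp add: PF)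
      thus ?thesis by (simp add: ipS_pc ipF_pc)
    qed
  qed (use df n in auto)
  moreover have "ipS l ?f (S.Pn (n+1)) = S.kn (n+1)"
    using S.coeffP[of ?f "n+1"] df by simp
  moreover have "ipS l ?f (S.Pn (n-1)) = kF n"
  proof -
    have "ipS l ?f (S.Pn (n-1)) = ipF ([:0,1:] * S.Pn (n-1)) (P n)"
      by (simp add: ipS_pc ipF_pc ipF_sym[of "P n"])
    also have "\<dots> = coeff ([:0,1:] * S.Pn (n-1)) n * kF n"
      using F.coeffP[of "[:0,1:] * S.Pn (n-1)" n] n by (simp add: PF kF_def)
    also have "coeff ([:0,1:] * S.Pn (n-1)) n = 1" using n by (cases n) auto
    finally show ?thesis by simp
  qed
  ultimately show ?thesis using S.kn_pos[of "n+1"] by (simp add: QS kS_def)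
qed

lemma norm_xP:
  assumes l: "l \<ge> 0" and n: "n \<ge> 1"
  shows "ipF ([:0,1:] * P n) ([:0,1:] * P n) = kS l (n+1) + (kF n)^2 / kS l (n-1)"
proof -
  interpret S: ortho "ipS l" by (rule ipS_ortho[OF l])
  have QS: "S.Pn m = Q l m" for m by (simp add: Q_def)
  define \<alpha> where "\<alpha> = kF n / kS l (n-1)"
  have o: "ipS l (Q l (n+1)) (Q l (n-1)) = 0" "ipS l (Q l (n-1)) (Q l (n+1)) = 0"
    using S.Pn_orth[of "n+1" "n-1"] S.Pn_orth[of "n-1" "n+1"] n by (auto simp: QS)
  have "ipF ([:0,1:] * P n) ([:0,1:] * P n) = ipS l ([:0,1:] * P n) ([:0,1:] * P n)"
    by (simp add: ipS_def)
  also have "\<dots> = ipS l (Q l (n+1) + smult \<alpha> (Q l (n-1))) (Q l (n+1) + smult \<alpha> (Q l (n-1)))"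
    using rec_S[OF l n] by (simp add: \<alpha>_def)
  also have "\<dots> = kS l (n+1) + \<alpha> * \<alpha> * kS l (n-1)"
    by (simp only: S.expand2 o kS_def)
  also have "\<alpha> * \<alpha> * kS l (n-1) = (kF n)^2 / kS l (n-1)"
    using kS_pos[OF l, of "n-1"] by (simp add: \<alpha>_def power2_eq_square)
  finally show ?thesis .
qed

lemma rec_F: "[:0,1:] * P n = P (n+1) + smult (c n) (P (n-1))"
proof (cases "n \<ge> 1")
  case True
  thus ?thesis using rec_S[of 0 n] by (simp add: Q0 kS0 c_def)
next
  case False
  hence n0: "n = 0" by simp
  interpret F: ortho ipF by (rule ipF_ortho)
  have PF: "F.Pn m = P m" for m by (simp add: P_def)
  have "[:0,1:] * P 0 = smult (ipF ([:0,1:] * P 0) (F.Pn 1) / F.kn 1) (F.Pn 1) + smult (ipF ([:0,1:] * P 0) (F.Pn 0) / F.kn 0) (F.Pn 0)"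
    by (rule F.two_term[where m=1]) auto
  moreover have "ipF ([:0,1:] * P 0) (F.Pn 1) = F.kn 1"
    using F.coeffP[of "[:0,1:] * P 0" 1] by (simp add: PF)
  moreover have "ipF ([:0,1:] * P 0) (F.Pn 0) = 0"
    using F.xPn_Pn[of "P 0" 0] F.parity_Pn[of 0] by (simp add: PF)
  ultimately show ?thesis using F.kn_pos[of 1] n0 by (simp add: PF c_def)
qed




lemma xx_eq: "[:0,1:] * ([:0,1:] * ([:0,1:] * p)) = [:0,0,0,1:] * (p::real poly)"
  by simp

lemma freud:
  assumes n: "n \<ge> 1"
  shows "real n = 4 * c n * (c (n-1) + c n + c (n+1))"
proof -
  interpret F: ortho ipF by (rule ipF_ortho)
  have PF: "F.Pn m = P m" for m by (simp add: P_def)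
  have kF: "ipF (P m) (P m) = kF m" for m by (simp add: kF_def)
  have s1: "ipF (pderiv (P n)) (P (n-1)) = real n * kF (n-1)"
  proof -
    have "ipF (pderiv (P n)) (F.Pn (n-1)) = coeff (pderiv (P n)) (n-1) * F.kn (n-1)"
      by (rule F.coeffP) (simp add: degree_pderiv)
    moreover have "coeff (pderiv (P n)) (n-1) = real n"
      using n by (simp add: coeff_pderiv)
    ultimately show ?thesis by (simp add: PF kF)
  qed
  have s2: "ipF (P n) (pderiv (P (n-1))) = 0"
    using F.orth_l[of "pderiv (P (n-1))" n] n by (simp add: PF degree_pderiv)
  have s3: "real n * kF (n-1) = 4 * ipF ([:0,1:] * P n) ([:0,1:] * ([:0,1:] * P (n-1)))"
    using ipF_ibp[of "P n" "P (n-1)"] s1 s2 ipF_x[of "P n" "[:0,1:] * ([:0,1:] * P (n-1))"]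
    by (simp only: xx_eq)
  have r1: "[:0,1:] * P (n-1) = P n + smult (c (n-1)) (P (n-1-1))"
  proof -
    have "n-1+1 = n" using n by simp
    thus ?thesis using rec_F[of "n-1"] by (simp only:)
  qed
  have s5: "ipF ([:0,1:] * P n) ([:0,1:] * ([:0,1:] * P (n-1)))
     = ipF ([:0,1:] * P n) ([:0,1:] * P n) + c (n-1) * ipF ([:0,1:] * P n) ([:0,1:] * P (n-1-1))"
  proof -
    have "[:0,1:] * ([:0,1:] * P (n-1)) = [:0,1:] * P n + smult (c (n-1)) ([:0,1:] * P (n-1-1))"
      by (subst r1) (simp add: algebra_simps)
    thus ?thesis by (simp only: F.add_r F.smult_r)
  qed
  have s6: "ipF ([:0,1:] * P n) ([:0,1:] * P n) = kF (n+1) + (kF n)^2 / kF (n-1)"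
    using norm_xP[of 0 n] n by (simp add: kS0)
  have s7: "c (n-1) * ipF ([:0,1:] * P n) ([:0,1:] * P (n-1-1)) = c (n-1) * kF n"
  proof (cases "n = 1")
    case True thus ?thesis by (simp add: c_def)
  next
    case False
    hence n2: "n \<ge> 2" using n by simp
    have "ipF ([:0,1:] * P n) ([:0,1:] * P (n-1-1)) = ipF ([:0,1:] * ([:0,1:] * P (n-1-1))) (P n)"
      using ipF_x[of "P n" "[:0,1:] * P (n-1-1)"] ipF_sym by metis
    also have "\<dots> = coeff ([:0,1:] * ([:0,1:] * P (n-1-1))) n * kF n"
      using F.coeffP[of "[:0,1:] * ([:0,1:] * P (n-1-1))" n] n2 by (simp add: PF kF)
    also have "coeff ([:0,1:] * ([:0,1:] * P (n-1-1))) n = 1"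
      using n2 by (cases n; cases "n-1") auto
    finally show ?thesis by simp
  qed
  have key: "real n * kF (n-1) = 4 * (kF (n+1) + (kF n)^2 / kF (n-1) + c (n-1) * kF n)"
    using s3 s5 s6 s7 by simp
  have p0: "kF (n-1) > 0" "kF n > 0" "kF (n+1) > 0" using kF_pos by auto
  have cn: "c n = kF n / kF (n-1)" "c (n+1) = kF (n+1) / kF n" using n by (auto simp: c_def)
  show ?thesis using key p0 unfolding cn by (simp add: field_simps power2_eq_square)
qed

theorem part12:
  assumes l: "l \<ge> 0"
  shows "(\<forall>n\<ge>1. c (n + 2) * c (n + 1) / a l (n + 2) + a l n = c (n + 1) + c n)
       \<and> (\<forall>n\<ge>1. a l (n + 1) * b l n = c (n + 1) * c n)"
proof (intro conjI allI impI)
  fix n :: nat assume n: "n \<ge> 1"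
  have p: "kF (n-1) > 0" "kF n > 0" "kF (n+1) > 0" "kF (n+2) > 0"
    "kS l (n-1) > 0" "kS l n > 0" "kS l (n+1) > 0" using kF_pos kS_pos[OF l] by auto
  have eq: "kS l (n+1) + (kF n)^2 / kS l (n-1) = kF (n+1) + (kF n)^2 / kF (n-1)"
    using norm_xP[OF l n] norm_xP[of 0 n] n by (simp add: kS0)
  have cs: "c n = kF n / kF (n-1)" "c (n+1) = kF (n+1) / kF n" "c (n+2) = kF (n+2) / kF (n+1)"
    using n by (auto simp: c_def)
  have as: "a l n = kF n / kS l (n-1)" "a l (n+1) = kF (n+1) / kS l n" "a l (n+2) = kF (n+2) / kS l (n+1)"
    by (auto simp: a_def)
  have bs: "b l n = kS l n / kF (n-1)" by (simp add: b_def)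
  show "a l (n + 1) * b l n = c (n + 1) * c n"
    unfolding as bs cs using p by (simp add: field_simps)
  show "c (n + 2) * c (n + 1) / a l (n + 2) + a l n = c (n + 1) + c n"
  proof -
    have "c (n + 2) * c (n + 1) / a l (n + 2) = kS l (n+1) / kF n"
      unfolding as cs using p by (simp add: field_simps)
    moreover have "kS l (n+1) / kF n + kF n / kS l (n-1) = kF (n+1) / kF n + kF n / kF (n-1)"
    proof -
      have "kS l (n+1) / kF n + kF n / kS l (n-1) = (kS l (n+1) + (kF n)^2 / kS l (n-1)) / kF n"
        using p by (simp add: field_simps power2_eq_square)
      also have "\<dots> = (kF (n+1) + (kF n)^2 / kF (n-1)) / kF n" by (simp only: eq)
      also have "\<dots> = kF (n+1) / kF n + kF n / kF (n-1)"
        using p by (simp add: field_simps power2_eq_square)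
      finally show ?thesis .
    qed
    ultimately show ?thesis unfolding as cs by simp
  qed
qed




lemma core1:
  fixes A B C xn xm xp n :: real
  assumes "n > 0" "A \<ge> 0" "B \<ge> 0" "C \<ge> 0" "xn \<ge> A * sqrt n" "xm \<ge> B * sqrt n" "xp \<ge> C * sqrt n"
    "n = 4 * xn * (xm + xn + xp)"
  shows "4 * A * (B + A + C) \<le> 1"
proof -
  have s: "sqrt n * sqrt n = n" using assms(1) by simp
  have sq: "sqrt n \<ge> 0" using assms(1) by simp
  have e1: "4 * A * (B + A + C) * n = (4 * (A * sqrt n)) * (B * sqrt n + A * sqrt n + C * sqrt n)"
    by (subst s[symmetric]) (simp only: algebra_simps)
  have a1: "4 * (A * sqrt n) \<le> 4 * xn" using assms by simp
  have a2: "B * sqrt n + A * sqrt n + C * sqrt n \<le> xm + xn + xp" using assms by simp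
  have a3: "0 \<le> B * sqrt n + A * sqrt n + C * sqrt n" using assms sq by simp
  have a4: "0 \<le> 4 * xn" using assms sq by (smt (verit) mult_nonneg_nonneg)
  have "4 * A * (B + A + C) * n \<le> 4 * xn * (xm + xn + xp)"
    unfolding e1 by (rule mult_mono[OF a1 a2 a4 a3])
  hence "4 * A * (B + A + C) * n \<le> 1 * n" using assms by simp
  thus ?thesis using assms(1) by simp
qed

lemma core2:
  fixes A B C xn xm xp n :: real
  assumes "n > 0" "xn \<ge> 0" "xm \<ge> 0" "xp \<ge> 0" "xn \<le> A * sqrt n" "xm \<le> B * sqrt n" "xp \<le> C * sqrt n"
    "n = 4 * xn * (xm + xn + xp)"
  shows "1 \<le> 4 * A * (B + A + C)"
proof -
  have s: "sqrt n * sqrt n = n" using assms(1) by simp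
  have e1: "4 * A * (B + A + C) * n = (4 * (A * sqrt n)) * (B * sqrt n + A * sqrt n + C * sqrt n)"
    by (subst s[symmetric]) (simp only: algebra_simps)
  have a1: "4 * xn \<le> 4 * (A * sqrt n)" using assms by simp
  have a2: "xm + xn + xp \<le> B * sqrt n + A * sqrt n + C * sqrt n" using assms by simp
  have a3: "0 \<le> xm + xn + xp" using assms by simp
  have a4: "0 \<le> 4 * (A * sqrt n)" using assms by simp
  have "4 * xn * (xm + xn + xp) \<le> 4 * A * (B + A + C) * n"
    unfolding e1 by (rule mult_mono[OF a1 a2 a4 a3])
  hence "1 * n \<le> 4 * A * (B + A + C) * n" using assms by simp
  thus ?thesis using assms(1) by simp
qed

lemma sqrt_lower:
  fixes e :: real and n :: nat
  assumes "0 < e" "e \<le> 1" "real n \<ge> 1 / e"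
  shows "(1 - e) * sqrt (real n) \<le> sqrt (real (n - 1))"
proof -
  have "1 \<le> 1 / e" using assms by simp
  hence n1: "real n \<ge> 1" using assms by linarith
  hence rn: "real (n - 1) = real n - 1" by simp
  have "e * real n \<ge> 1" using assms by (simp add: field_simps)
  moreover have "(1-e)^2 * real n = real n - 2*(e*real n) + e*e*real n" by (simp add: power2_eq_square algebra_simps)
  moreover have "e * e \<le> e * 1" by (rule mult_left_mono) (use assms in auto)
  hence "e * e * real n \<le> e * 1 * real n" by (rule mult_right_mono) simp
  ultimately have "(1 - e)^2 * real n \<le> real n - 1" by linarith
  hence "sqrt ((1 - e)^2 * real n) \<le> sqrt (real n - 1)" by (rule real_sqrt_le_mono)
  hence "(1 - e) * sqrt (real n) \<le> sqrt (real n - 1)" using assms by (simp add: real_sqrt_mult)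
  thus ?thesis by (simp only: rn)
qed

lemma sqrt_upper:
  fixes e :: real and n :: nat
  assumes "0 < e" "real n \<ge> 1 / e"
  shows "sqrt (real (n + 1)) \<le> (1 + e) * sqrt (real n)"
proof -
  have "e * real n \<ge> 1" using assms by (simp add: field_simps)
  moreover have "(1+e)^2 * real n = real n + 2*(e*real n) + e*e*real n" by (simp add: power2_eq_square algebra_simps)
  moreover have "0 \<le> e * e * real n" using assms by simp
  ultimately have "real n + 1 \<le> (1 + e)^2 * real n" by linarith
  hence "sqrt (real n + 1) \<le> sqrt ((1 + e)^2 * real n)" by (rule real_sqrt_le_mono)
  hence "sqrt (real n + 1) \<le> (1 + e) * sqrt (real n)" using assms by (simp add: real_sqrt_mult)
  thus ?thesis by (simp add: add.commute)
qed



lemma freud_limit: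
  fixes x :: "nat \<Rightarrow> real"
  assumes x0: "x 0 = 0" and pos: "\<And>n. n \<ge> 1 \<Longrightarrow> x n > 0"
    and eq: "\<And>n. n \<ge> 1 \<Longrightarrow> real n = 4 * x n * (x (n-1) + x n + x (n+1))"
  shows "(\<lambda>n. x n / sqrt (real n)) \<longlonglongrightarrow> 1 / (2 * sqrt 3)"
proof -
  define w where "w n = x n / sqrt (real n)" for n
  have xnn: "x n \<ge> 0" for n using pos[of n] x0 by (cases "n = 0") auto
  have xw: "x n = w n * sqrt (real n)" for n
    using x0 by (cases "n = 0") (auto simp: w_def)
  have xub: "x k \<le> sqrt (real k) / 2" for k
  proof (cases "k = 0")
    case True thus ?thesis using x0 by simp
  next
    case False
    hence k: "k \<ge> 1" by simp
    have "4 * x k * x k \<le> 4 * x k * (x (k-1) + x k + x (k+1))"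
      using xnn[of k] xnn[of "k-1"] xnn[of "k+1"] by (intro mult_left_mono) auto
    hence "(2 * x k)^2 \<le> real k" using eq[OF k] by (simp add: power2_eq_square)
    hence "2 * x k \<le> sqrt (real k)" by (rule real_le_rsqrt)
    thus ?thesis by simp
  qed
  have wub: "w n \<le> 1/2" for n
  proof (cases "n = 0")
    case True thus ?thesis by (simp add: w_def)
  next
    case False
    hence "sqrt (real n) > 0" by simp
    thus ?thesis using xub[of n] by (simp add: w_def divide_simps)
  qed
  have wlb: "w n \<ge> 1/8" if n: "n \<ge> 1" for n
  proof -
    have sn: "sqrt (real (n+1)) \<le> 3/2 * sqrt (real n)"
    proof -
      have "real n \<ge> 1" using n by simp
      hence "real (n+1) \<le> (3/2)^2 * real n" by (simp add: power2_eq_square)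
      hence "sqrt (real (n+1)) \<le> sqrt ((3/2)^2 * real n)" by (rule real_sqrt_le_mono)
      thus ?thesis by (simp add: real_sqrt_mult)
    qed
    have sm: "sqrt (real (n-1)) \<le> sqrt (real n)" by simp
    have "1 \<le> 4 * w n * (3/4 + w n + 3/4)"
    proof (rule core2[of "real n" "x n" "x (n-1)" "x (n+1)"])
      have s0: "sqrt (real n) \<ge> 0" by simp
      show "x (n-1) \<le> 3/4 * sqrt (real n)" using xub[of "n-1"] sm s0 by linarith
      show "x (n+1) \<le> 3/4 * sqrt (real n)" using xub[of "n+1"] sn by linarith
      show "x n \<le> w n * sqrt (real n)" using xw by simp
      show "real n > 0" using n by simp
      show "real n = 4 * x n * (x (n - 1) + x n + x (n + 1))" by (rule eq[OF n])
    qed (rule xnn)+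
    also have "\<dots> \<le> 4 * w n * (3/4 + 1/2 + 3/4)"
    proof (rule mult_left_mono)
      show "3/4 + w n + 3/4 \<le> 3/4 + 1/2 + 3/4" using wub[of n] by simp
      have "w n \<ge> 0" unfolding w_def using xnn[of n] by simp
      thus "0 \<le> 4 * w n" by simp
    qed
    finally show ?thesis by simp
  qed
  define Ls where "Ls = limsup (\<lambda>n. ereal (w n))"
  define Li where "Li = liminf (\<lambda>n. ereal (w n))"
  have Ls_ub: "Ls \<le> ereal (1/2)" unfolding Ls_def by (rule Limsup_bounded) (use wub in auto)
  have Li_lb: "ereal (1/8) \<le> Li" unfolding Li_def
    by (rule Liminf_bounded) (use wlb in \<open>auto simp: eventually_sequentially\<close>)
  have LiLs: "Li \<le> Ls" unfolding Li_def Ls_def by (rule Liminf_le_Limsup) simp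
  define L1 where "L1 = real_of_ereal Ls"
  define L2 where "L2 = real_of_ereal Li"
  have eL1: "ereal L1 = Ls" unfolding L1_def using Ls_ub Li_lb LiLs by (cases Ls) auto
  have eL2: "ereal L2 = Li" unfolding L2_def using Ls_ub Li_lb LiLs by (cases Li) auto
  have L2lb: "L2 \<ge> 1/8" using Li_lb eL2 by (metis ereal_less_eq(3))
  have L21: "L2 \<le> L1" using LiLs eL1 eL2 by (metis ereal_less_eq(3))
  have ev_lo: "eventually (\<lambda>n. L2 - e < w n) sequentially" if "e > 0" for e
  proof -
    have "ereal (L2 - e) < Li" unfolding eL2[symmetric] using that by simp
    from less_LiminfD[OF this[unfolded Li_def]] show ?thesis by simp
  qed
  have ev_hi: "eventually (\<lambda>n. w n < L1 + e) sequentially" if "e > 0" for e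
  proof -
    have "ereal (L1 + e) > Ls" unfolding eL1[symmetric] using that by simp
    from Limsup_lessD[OF this[unfolded Ls_def]] show ?thesis by simp
  qed
  have fr_hi: "frequently (\<lambda>n. L1 - e < w n) sequentially" if "e > 0" for e
  proof (rule ccontr)
    assume "\<not> ?thesis"
    hence "eventually (\<lambda>n. \<not> (L1 - e < w n)) sequentially" by (simp add: not_frequently)
    hence "eventually (\<lambda>n. ereal (w n) \<le> ereal (L1 - e)) sequentially" by (auto elim: eventually_mono)
    hence "Ls \<le> ereal (L1 - e)" unfolding Ls_def by (rule Limsup_bounded)
    thus False using eL1 that by auto
  qed
  have fr_lo: "frequently (\<lambda>n. w n < L2 + e) sequentially" if "e > 0" for e
  proof (rule ccontr)
    assume "\<not> ?thesis"
    hence "eventually (\<lambda>n. \<not> (w n < L2 + e)) sequentially" by (simp add: not_frequently)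
    hence "eventually (\<lambda>n. ereal (L2 + e) \<le> ereal (w n)) sequentially" by (auto elim: eventually_mono)
    hence "ereal (L2 + e) \<le> Li" unfolding Li_def by (rule Liminf_bounded)
    thus False using eL2 that by auto
  qed
  have ineq1: "4 * (L1 - e) * ((L2 - e) * (1 - e) + (L1 - e) + (L2 - e)) \<le> 1" if e: "0 < e" "e < 1/20" for e
  proof -
    obtain N where N: "\<And>n. n \<ge> N \<Longrightarrow> L2 - e < w n" using ev_lo[OF e(1)] by (auto simp: eventually_sequentially)
    define M where "M = max (N + 1) (nat \<lceil>1/e\<rceil> + 1)"
    obtain n where n: "n \<ge> M" "L1 - e < w n" using fr_hi[OF e(1)] unfolding frequently_sequentially by blast
    have n1: "n \<ge> 1" "n - 1 \<ge> N" "n + 1 \<ge> N" using n by (auto simp: M_def)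
    have ne: "real n \<ge> 1 / e" using n(1) unfolding M_def by linarith
    have L2e: "L2 - e \<ge> 0" "L1 - e \<ge> 0" using L2lb L21 e by auto
    show ?thesis
    proof (rule core1[of "real n" _ _ _ "x n" "x (n-1)" "x (n+1)"])
      show "x n \<ge> (L1 - e) * sqrt (real n)" using n(2) xw[of n] by (simp add: mult_right_mono)
      have "x (n-1) \<ge> (L2 - e) * sqrt (real (n-1))" using N[OF n1(2)] xw[of "n-1"] by (simp add: mult_right_mono)
      moreover have "(L2 - e) * ((1 - e) * sqrt (real n)) \<le> (L2 - e) * sqrt (real (n-1))"
        using sqrt_lower[of e n] e ne L2e by (intro mult_left_mono) auto
      ultimately show "x (n-1) \<ge> (L2 - e) * (1 - e) * sqrt (real n)" by (simp add: mult.assoc)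
      have "x (n+1) \<ge> (L2 - e) * sqrt (real (n+1))" using N[OF n1(3)] xw[of "n+1"] by (simp add: mult_right_mono)
      moreover have "(L2 - e) * sqrt (real n) \<le> (L2 - e) * sqrt (real (n+1))"
        using L2e by (intro mult_left_mono) auto
      ultimately show "x (n+1) \<ge> (L2 - e) * sqrt (real n)" by simp
      show "real n > 0" using n1 by simp
      show "real n = 4 * x n * (x (n - 1) + x n + x (n + 1))" by (rule eq[OF n1(1)])
      show "0 \<le> (L2 - e) * (1 - e)" using L2e e by simp
    qed (use L2e in auto)
  qed
  have ineq2: "1 \<le> 4 * (L2 + e) * ((L1 + e) + (L2 + e) + (L1 + e) * (1 + e))" if e: "0 < e" "e < 1/20" for e
  proof -
    obtain N where N: "\<And>n. n \<ge> N \<Longrightarrow> w n < L1 + e" using ev_hi[OF e(1)] by (auto simp: eventually_sequentially)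
    define M where "M = max (N + 1) (nat \<lceil>1/e\<rceil> + 1)"
    obtain n where n: "n \<ge> M" "w n < L2 + e" using fr_lo[OF e(1)] unfolding frequently_sequentially by blast
    have n1: "n \<ge> 1" "n - 1 \<ge> N" "n + 1 \<ge> N" using n by (auto simp: M_def)
    have ne: "real n \<ge> 1 / e" using n(1) unfolding M_def by linarith
    have L2e: "L2 + e \<ge> 0" "L1 + e \<ge> 0" using L2lb L21 e by auto
    show ?thesis
    proof (rule core2[of "real n" "x n" "x (n-1)" "x (n+1)"])
      show "x n \<le> (L2 + e) * sqrt (real n)" using n(2) xw[of n] by (simp add: mult_right_mono)
      have "x (n-1) \<le> (L1 + e) * sqrt (real (n-1))" using N[OF n1(2)] xw[of "n-1"] by (simp add: mult_right_mono)
      moreover have "(L1 + e) * sqrt (real (n-1)) \<le> (L1 + e) * sqrt (real n)"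
        using L2e by (intro mult_left_mono) auto
      ultimately show "x (n-1) \<le> (L1 + e) * sqrt (real n)" by simp
      have "x (n+1) \<le> (L1 + e) * sqrt (real (n+1))" using N[OF n1(3)] xw[of "n+1"] by (simp add: mult_right_mono)
      moreover have "(L1 + e) * sqrt (real (n+1)) \<le> (L1 + e) * ((1 + e) * sqrt (real n))"
        using sqrt_upper[of e n] e ne L2e by (intro mult_left_mono) auto
      ultimately show "x (n+1) \<le> (L1 + e) * (1 + e) * sqrt (real n)" by (simp add: mult.assoc)
      show "real n > 0" using n1 by simp
      show "real n = 4 * x n * (x (n - 1) + x n + x (n + 1))" by (rule eq[OF n1(1)])
    qed (rule xnn)+
  qed
  have evr: "eventually (\<lambda>e. 0 < e \<and> e < 1/20) (at_right (0::real))"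
    using eventually_at_right_real[of 0 "1/20::real"] by (auto elim: eventually_mono)
  have I1: "4 * L1 * (L2 + L1 + L2) \<le> 1"
  proof -
    have "((\<lambda>e. 4 * (L1 - e) * ((L2 - e) * (1 - e) + (L1 - e) + (L2 - e))) \<longlongrightarrow>
           4 * (L1 - 0) * ((L2 - 0) * (1 - 0) + (L1 - 0) + (L2 - 0))) (at_right 0)"
      by (intro tendsto_intros)
    moreover have "eventually (\<lambda>e. 4 * (L1 - e) * ((L2 - e) * (1 - e) + (L1 - e) + (L2 - e)) \<le> 1) (at_right (0::real))"
      by (rule eventually_mono[OF evr]) (rule ineq1; simp)
    ultimately have "4 * (L1 - 0) * ((L2 - 0) * (1 - 0) + (L1 - 0) + (L2 - 0)) \<le> 1"
      by (intro tendsto_upperbound) auto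
    thus ?thesis by simp
  qed
  have I2: "1 \<le> 4 * L2 * (L1 + L2 + L1)"
  proof -
    have "((\<lambda>e. 4 * (L2 + e) * ((L1 + e) + (L2 + e) + (L1 + e) * (1 + e))) \<longlongrightarrow>
           4 * (L2 + 0) * ((L1 + 0) + (L2 + 0) + (L1 + 0) * (1 + 0))) (at_right 0)"
      by (intro tendsto_intros)
    moreover have "eventually (\<lambda>e. 1 \<le> 4 * (L2 + e) * ((L1 + e) + (L2 + e) + (L1 + e) * (1 + e))) (at_right (0::real))"
      by (rule eventually_mono[OF evr]) (rule ineq2; simp)
    ultimately have "1 \<le> 4 * (L2 + 0) * ((L1 + 0) + (L2 + 0) + (L1 + 0) * (1 + 0))"
      by (intro tendsto_lowerbound) auto
    thus ?thesis by simp
  qed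
  have "L1 * L1 \<le> L2 * L2" using I1 I2 by (simp add: algebra_simps)
  hence "L1 \<le> L2" using L2lb L21 by (metis abs_of_nonneg abs_le_square_iff order_trans power2_eq_square zero_le_divide_1_iff zero_le_numeral)
  hence eq12: "L1 = L2" using L21 by simp
  have "12 * (L1 * L1) = 1" using I1 I2 eq12 by simp
  hence "(2 * sqrt 3 * L1)^2 = 1" by (simp add: power2_eq_square algebra_simps)
  moreover have "2 * sqrt 3 * L1 \<ge> 0" using L2lb eq12 by simp
  ultimately have "2 * sqrt 3 * L1 = 1" by (simp add: power2_eq_1_iff)
  hence L1v: "L1 = 1 / (2 * sqrt 3)" by (simp add: field_simps)
  have "w \<longlonglongrightarrow> L1"
    by (rule limsup_le_liminf_real) (use eL1 eL2 eq12 in \<open>auto simp: Ls_def Li_def\<close>)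
  thus ?thesis using L1v by (simp add: w_def[abs_def])
qed




lemma delta_step:
  fixes s t e :: real
  assumes "0 < e" "e \<le> 1" "0 \<le> t" "0 < s" "s \<le> 1 + e/2"
  shows "s * t / (1 + t) \<le> max e ((1 + e/2) / (1 + e) * t)"
proof (cases "t \<le> e")
  case True
  have "s * t / (1 + t) \<le> (1 + e/2) * t / (1 + t)"
    using assms by (intro divide_right_mono mult_right_mono) auto
  also have "\<dots> \<le> e"
  proof -
    have "(1 + e/2) * t \<le> e * (1 + t)"
    proof -
      have "(1 - e/2) * t \<le> 1 * e" using True assms by (intro mult_mono) auto
      thus ?thesis by (simp add: algebra_simps)
    qed
    thus ?thesis by (subst pos_divide_le_eq) (use assms in auto)
  qed
  finally show ?thesis by simp
next
  case False
  have "s * t / (1 + t) \<le> (1 + e/2) * t / (1 + t)"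
    using assms by (intro divide_right_mono mult_right_mono) auto
  also have "\<dots> \<le> (1 + e/2) * t / (1 + e)"
    using False assms by (intro divide_left_mono mult_nonneg_nonneg) auto
  also have "\<dots> = (1 + e/2) / (1 + e) * t" by simp
  finally show ?thesis by simp
qed

lemma delta_lim:
  fixes d s :: "nat \<Rightarrow> real"
  assumes dnn: "\<And>n. d n \<ge> 0"
    and spos: "\<And>n. n \<ge> 1 \<Longrightarrow> s n > 0"
    and slim: "s \<longlonglongrightarrow> 1"
    and rec: "\<And>n. n \<ge> 1 \<Longrightarrow> d (n+1) = s n * d (n-1) / (1 + d (n-1))"
  shows "d \<longlonglongrightarrow> 0"
proof -
  have main: "eventually (\<lambda>n. d n \<le> e) sequentially" if e: "0 < e" "e \<le> 1" for e
  proof -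
    define q where "q = (1 + e/2) / (1 + e)"
    have q: "0 < q" "q < 1" using e by (auto simp: q_def divide_simps)
    have "eventually (\<lambda>n. s n < 1 + e/2) sequentially"
      using slim e by (intro order_tendstoD) auto
    then obtain N0 where N0: "\<And>n. n \<ge> N0 \<Longrightarrow> s n < 1 + e/2" by (auto simp: eventually_sequentially)
    define K where "K = N0"
    have step: "d (k+2) \<le> max e (q * d k)" if "k \<ge> K" for k
    proof -
      have "d (Suc k + 1) = s (Suc k) * d (Suc k - 1) / (1 + d (Suc k - 1))" by (rule rec) simp
      hence "d (k+2) = s (Suc k) * d k / (1 + d k)" by simp
      also have "\<dots> \<le> max e (q * d k)" unfolding q_def
        using e dnn[of k] spos[of "Suc k"] N0[of "Suc k"] that K_def by (intro delta_step) auto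
      finally show ?thesis .
    qed
    define B where "B = max (d K) (d (K+1))"
    have chain: "d (K + r + 2*j) \<le> max e (q^j * B)" if "r \<le> 1" for r j
    proof (induction j)
      case 0 thus ?case using that by (cases r) (auto simp: B_def)
    next
      case (Suc j)
      have "d (K + r + 2 * Suc j) = d ((K + r + 2*j) + 2)" by simp
      also have "\<dots> \<le> max e (q * d (K + r + 2*j))" by (rule step) simp
      also have "\<dots> \<le> max e (q * max e (q^j * B))"
        using Suc q by (intro max.mono mult_left_mono) auto
      also have "\<dots> \<le> max e (q^Suc j * B)"
      proof -
        have qe: "q * e \<le> e" using q e by (simp add: mult_le_cancel_right1)
        have "q * max e (q^j * B) = max (q * e) (q * (q^j * B))"
          using q by (cases "e \<le> q^j * B") (auto simp: max_def mult_left_mono)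
        hence "max e (q * max e (q^j * B)) = max e (q * (q^j * B))" using qe by (auto simp: max_def)
        thus ?thesis by (simp add: mult.assoc)
      qed
      finally show ?case .
    qed
    have "(\<lambda>j. q^j * B) \<longlonglongrightarrow> 0 * B" using q by (intro tendsto_mult LIMSEQ_power_zero) auto
    hence "eventually (\<lambda>j. q^j * B < e) sequentially" using e by (intro order_tendstoD) auto
    then obtain J where J: "\<And>j. j \<ge> J \<Longrightarrow> q^j * B < e" by (auto simp: eventually_sequentially)
    show ?thesis unfolding eventually_sequentially
    proof (intro exI allI impI)
      fix n assume n: "n \<ge> K + 2*J"
      define r where "r = (n - K) mod 2"
      define j where "j = (n - K) div 2"
      have nr: "n = K + r + 2*j" using n unfolding r_def j_def by simp
      have "r \<le> 1" unfolding r_def by simp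
      have "j \<ge> J" using n unfolding j_def by simp
      have "d n \<le> max e (q^j * B)" using chain[OF \<open>r \<le> 1\<close>, of j] nr by simp
      also have "\<dots> = e" using J[OF \<open>j \<ge> J\<close>] by simp
      finally show "d n \<le> e" .
    qed
  qed
  show ?thesis
  proof (rule LIMSEQ_I)
    fix r :: real assume r: "r > 0"
    have "eventually (\<lambda>n. d n \<le> min (r/2) 1) sequentially" using r by (intro main) auto
    then obtain N where N: "\<And>n. n \<ge> N \<Longrightarrow> d n \<le> min (r/2) 1" by (auto simp: eventually_sequentially)
    have "norm (d n - 0) < r" if "n \<ge> N" for n
    proof -
      have "d n \<le> r/2" using N[OF that] by simp
      thus ?thesis using dnn[of n] r by simp
    qed
    thus "\<exists>N. \<forall>n\<ge>N. norm (d n - 0) < r" by blast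
  qed
qed




lemma kF_le_kS: assumes l: "l \<ge> 0" shows "kF n \<le> kS l n"
proof -
  interpret S: ortho "ipS l" by (rule ipS_ortho[OF l])
  interpret F: ortho ipF by (rule ipF_ortho)
  have "kF n \<le> ipF (Q l n) (Q l n)"
    unfolding kF_def P_def by (rule F.min_norm) (simp_all add: Q_def)
  also have "\<dots> \<le> kS l n" unfolding kS_def ipS_def using l by (simp add: mult.assoc)
  finally show ?thesis .
qed

lemma sqrt_ratio: "(\<lambda>n. sqrt (real n) / sqrt (real (n+1))) \<longlonglongrightarrow> 1"
proof -
  have "(\<lambda>n. sqrt (real n / real (Suc n))) \<longlonglongrightarrow> sqrt 1"
    by (intro tendsto_real_sqrt LIMSEQ_n_over_Suc_n)
  thus ?thesis by (simp add: real_sqrt_divide)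
qed

theorem part3:
  assumes l: "l \<ge> 0"
  shows "((\<lambda>n. a l n / sqrt (real n)) \<longlonglongrightarrow> 1 / (2 * sqrt 3))
       \<and> ((\<lambda>n. b l n / sqrt (real n)) \<longlonglongrightarrow> 1 / (2 * sqrt 3))"
proof -
  define L where "L = 1 / (2 * sqrt 3)"
  have Lpos: "L > 0" unfolding L_def by simp
  have cpos: "c n > 0" if "n \<ge> 1" for n using that kF_pos by (simp add: c_def)
  have clim: "(\<lambda>n. c n / sqrt (real n)) \<longlonglongrightarrow> L"
    unfolding L_def by (rule freud_limit[OF _ cpos freud]) (simp add: c_def)
  have clim1: "(\<lambda>n. c (n+1) / sqrt (real (n+1))) \<longlonglongrightarrow> L"
    using LIMSEQ_Suc[OF clim] by simp
  define s where "s n = c n / c (n+1)" for n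
  have slim: "s \<longlonglongrightarrow> 1"
  proof -
    have "(\<lambda>n. (c n / sqrt (real n)) / (c (n+1) / sqrt (real (n+1))) * (sqrt (real n) / sqrt (real (n+1))))
          \<longlonglongrightarrow> L / L * 1"
      using Lpos by (intro tendsto_intros clim clim1 sqrt_ratio) auto
    hence "(\<lambda>n. (c n / sqrt (real n)) / (c (n+1) / sqrt (real (n+1))) * (sqrt (real n) / sqrt (real (n+1))))
          \<longlonglongrightarrow> 1" using Lpos by simp
    moreover have "eventually (\<lambda>n. (c n / sqrt (real n)) / (c (n+1) / sqrt (real (n+1))) * (sqrt (real n) / sqrt (real (n+1))) = s n) sequentially"
      unfolding eventually_sequentially
      by (intro exI[of _ 1] allI impI) (simp add: s_def field_simps)
    ultimately show ?thesis by (rule Lim_transform_eventually)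
  qed
  define d where "d n = kS l n / kF n - 1" for n
  have dnn: "d n \<ge> 0" for n using kF_le_kS[OF l, of n] kF_pos[of n] by (simp add: d_def field_simps)
  have spos: "s n > 0" if "n \<ge> 1" for n using cpos[of n] cpos[of "n+1"] that by (simp add: s_def)
  have drec: "d (n+1) = s n * d (n-1) / (1 + d (n-1))" if n: "n \<ge> 1" for n
  proof -
    have p: "kF (n-1) > 0" "kF n > 0" "kF (n+1) > 0" "kS l (n-1) > 0" using kF_pos kS_pos[OF l] by auto
    have eq: "kS l (n+1) = kF (n+1) + (kF n)^2 / kF (n-1) - (kF n)^2 / kS l (n-1)"
      using norm_xP[OF l n] norm_xP[of 0 n] n by (simp add: kS0)
    have cs: "c n = kF n / kF (n-1)" "c (n+1) = kF (n+1) / kF n" using n by (auto simp: c_def)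
    show ?thesis unfolding d_def s_def cs eq using p by (simp add: field_simps power2_eq_square)
  qed
  have dlim: "d \<longlonglongrightarrow> 0" by (rule delta_lim[OF dnn spos slim drec])
  define \<rho> where "\<rho> n = kS l n / kF n" for n
  have rlim: "\<rho> \<longlonglongrightarrow> 1"
  proof -
    have "(\<lambda>n. d n + 1) \<longlonglongrightarrow> 0 + 1" by (intro tendsto_intros dlim)
    thus ?thesis by (simp add: d_def \<rho>_def[abs_def])
  qed
  have rlim1: "(\<lambda>n. \<rho> (n-1)) \<longlonglongrightarrow> 1"
    using rlim by (subst filterlim_sequentially_Suc[symmetric]) simp
  have rpos: "\<rho> n > 0" for n using kF_pos[of n] kS_pos[OF l, of n] by (simp add: \<rho>_def)
  have A: "(\<lambda>n. a l n / sqrt (real n)) \<longlonglongrightarrow> L"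
  proof -
    have "(\<lambda>n. (c n / sqrt (real n)) / \<rho> (n-1)) \<longlonglongrightarrow> L / 1"
      by (intro tendsto_intros clim rlim1) simp
    moreover have "eventually (\<lambda>n. (c n / sqrt (real n)) / \<rho> (n-1) = a l n / sqrt (real n)) sequentially"
    proof -
      have "(c n / sqrt (real n)) / \<rho> (n-1) = a l n / sqrt (real n)" if n: "n \<ge> 1" for n
      proof -
        have p: "kF (n-1) > 0" "kF n > 0" "kS l (n-1) > 0" using kF_pos kS_pos[OF l] by auto
        show ?thesis using n p by (simp add: c_def a_def \<rho>_def field_simps)
      qed
      thus ?thesis unfolding eventually_sequentially by blast
    qed
    ultimately show ?thesis by (simp add: Lim_transform_eventually)
  qed
  have B: "(\<lambda>n. b l n / sqrt (real n)) \<longlonglongrightarrow> L"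
  proof -
    have "(\<lambda>n. \<rho> n * (c n / sqrt (real n))) \<longlonglongrightarrow> 1 * L"
      by (intro tendsto_intros clim rlim)
    moreover have "eventually (\<lambda>n. \<rho> n * (c n / sqrt (real n)) = b l n / sqrt (real n)) sequentially"
    proof -
      have "\<rho> n * (c n / sqrt (real n)) = b l n / sqrt (real n)" if n: "n \<ge> 1" for n
      proof -
        have p: "kF (n-1) > 0" "kF n > 0" "kS l n > 0" using kF_pos kS_pos[OF l] by auto
        show ?thesis using n p by (simp add: c_def b_def \<rho>_def field_simps)
      qed
      thus ?thesis unfolding eventually_sequentially by blast
    qed
    ultimately show ?thesis by (simp add: Lim_transform_eventually)
  qed
  show ?thesis using A B unfolding L_def by simp
qed

theorem mainTheorem3:
  fixes l1 :: real
  assumes "l1 \<ge> 0"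
  shows "(\<forall>n\<ge>1. c (n + 2) * c (n + 1) / a l1 (n + 2) + a l1 n = c (n + 1) + c n)
       \<and> (\<forall>n\<ge>1. a l1 (n + 1) * b l1 n = c (n + 1) * c n)
       \<and> ((\<lambda>n. a l1 n / sqrt (real n)) \<longlonglongrightarrow> 1 / (2 * sqrt 3))
       \<and> ((\<lambda>n. b l1 n / sqrt (real n)) \<longlonglongrightarrow> 1 / (2 * sqrt 3))"
  using part12[OF assms] part3[OF assms] by blast


end
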